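(* Let $\Omega\subset\mathbb{R}^N$ be a bounded smooth domain, $\gamma\ge0$, $q\in(0,\gamma+1)$, $a\in C(\overline\Omega)$, and let $F$ satisfy (F1) and (F2). Let $u$ be a nontrivial viscosity solution of $(\mathrm{P}_{a,q})$. Then there exists a nonempty open subdomain $\Omega'\subset\Omega^+=\{x\in\Omega:a(x)>0\}$ such that $u>0$ in $\Omega'$.
   Context: $\mathrm{Sym}(N)$ is the space of real symmetric $N\times N$ matrices. For $0<\lambda\le\Lambda$ the Pucci extremal operators are $\mathcal{M}^{+}_{\lambda,\Lambda}(X)=\Lambda\sum_{e_i>0}e_i(X)+\lambda\sum_{e_i<0}e_i(X)$ and $\mathcal{M}^{-}_{\lambda,\Lambda}(X)=\lambda\sum_{e_i>0}e_i(X)+\Lambda\sum_{e_i<0}e_i(X)$. (F1) There are constants $\Lambda\ge\lambda>0$ with $\mathcal{M}^-_{\lambda,\Lambda}(Y)\le F(x,X+Y)-F(x,X)\le\mathcal{M}^+_{\lambda,\Lambda}(Y)$ for all $x\in\Omega$, $X,Y\in\mathrm{Sym}(N)$, $Y\ge0$. (F2) $F(x,sX)=sF(x,X)$ for all $s>0$. Viscosity solutions: for continuous $G(x,r,p,X)$, $u\in C(\Omega)$ is a viscosity supersolution (resp. subsolution) of $G(x,u,Du,D^2u)=0$ if whenever $\phi\in C^2(\Omega)$ and $u-\phi$ has a local minimum (resp. maximum) at $x_0$, then $G(x_0,u(x_0),D\phi(x_0),D^2\phi(x_0))\le0$ (resp. $\ge0$); a solution is both. Problem $(\mathrm{P}_{a,q})$: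 find $u\in C(\overline{\Omega})$, $u\ge0$ in $\Omega$, $u=0$ on $\partial\Omega$, viscosity solution of $|Du|^\gamma F(x,D^2u)+a(x)u^q=0$ in $\Omega$. Nontrivial means $u\not\equiv0$. *)

theory Defs
  imports "HOL-Analysis.Analysis"
begin

definition Sym :: "(real^'n^'n) set" where
  "Sym = {X. transpose X = X}"

definition psd :: "real^'n^'n \<Rightarrow> bool" where
  "psd Y \<longleftrightarrow> (\<forall>v. 0 \<le> v \<bullet> (Y *v v))"

definition eigvals :: "real^'n^'n \<Rightarrow> real set" where
  "eigvals X = {e. \<exists>v. v \<noteq> 0 \<and> X *v v = e *s v}"

text \<open>multiplicity of an eigenvalue of a symmetric matrix = dimension of its eigenspace\<close>
definition eigmult :: "real^'n^'n \<Rightarrow> real \<Rightarrow> nat" where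
  "eigmult X e = dim {v. X *v v = e *s v}"

definition pos_eig_sum :: "real^'n^'n \<Rightarrow> real" where
  "pos_eig_sum X = (\<Sum>e\<in>{e\<in>eigvals X. e > 0}. e * real (eigmult X e))"

definition neg_eig_sum :: "real^'n^'n \<Rightarrow> real" where
  "neg_eig_sum X = (\<Sum>e\<in>{e\<in>eigvals X. e < 0}. e * real (eigmult X e))"

definition pucci_plus :: "real \<Rightarrow> real \<Rightarrow> real^'n^'n \<Rightarrow> real" where
  "pucci_plus lam Lam X = Lam * pos_eig_sum X + lam * neg_eig_sum X"

definition pucci_minus :: "real \<Rightarrow> real \<Rightarrow> real^'n^'n \<Rightarrow> real" where
  "pucci_minus lam Lam X = lam * pos_eig_sum X + Lam * neg_eig_sum X"

definition F1 :: "(real^'n) set \<Rightarrow> (real^'n \<Rightarrow> real^'n^'n \<Rightarrow> real) \<Rightarrow> bool" where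
  "F1 \<Omega> F \<longleftrightarrow> (\<exists>lam Lam. 0 < lam \<and> lam \<le> Lam \<and>
     (\<forall>x\<in>\<Omega>. \<forall>X\<in>Sym. \<forall>Y\<in>Sym. psd Y \<longrightarrow>
        pucci_minus lam Lam Y \<le> F x (X + Y) - F x X \<and>
        F x (X + Y) - F x X \<le> pucci_plus lam Lam Y))"

definition F2 :: "(real^'n) set \<Rightarrow> (real^'n \<Rightarrow> real^'n^'n \<Rightarrow> real) \<Rightarrow> bool" where
  "F2 \<Omega> F \<longleftrightarrow> (\<forall>x\<in>\<Omega>. \<forall>X\<in>Sym. \<forall>s::real. s > 0 \<longrightarrow> F x (s *\<^sub>R X) = s * F x X)"

coinductive Cinf :: "'a::euclidean_space set \<Rightarrow> ('a \<Rightarrow> real) \<Rightarrow> bool" for S where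
  "continuous_on S f \<Longrightarrow> (\<forall>x\<in>S. f differentiable (at x)) \<Longrightarrow>
   (\<forall>i\<in>Basis. Cinf S (\<lambda>x. frechet_derivative f (at x) i)) \<Longrightarrow> Cinf S f"

definition smooth_bounded_domain :: "'a::euclidean_space set \<Rightarrow> bool" where
  "smooth_bounded_domain \<Omega> \<longleftrightarrow> open \<Omega> \<and> connected \<Omega> \<and> \<Omega> \<noteq> {} \<and> bounded \<Omega> \<and>
     (\<forall>x0\<in>frontier \<Omega>. \<exists>r>0. \<exists>\<rho>. Cinf (ball x0 r) \<rho> \<and>
        (\<forall>x\<in>ball x0 r. frechet_derivative \<rho> (at x) \<noteq> (\<lambda>h. 0)) \<and>
        \<Omega> \<inter> ball x0 r = {x\<in>ball x0 r. \<rho> x < 0})"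

definition C2_on :: "(real^'n) set \<Rightarrow> (real^'n \<Rightarrow> real) \<Rightarrow> (real^'n \<Rightarrow> real^'n)
    \<Rightarrow> (real^'n \<Rightarrow> real^'n^'n) \<Rightarrow> bool" where
  "C2_on \<Omega> \<phi> D\<phi> H\<phi> \<longleftrightarrow>
     (\<forall>x\<in>\<Omega>. (\<phi> has_derivative (\<lambda>h. D\<phi> x \<bullet> h)) (at x) \<and>
              (D\<phi> has_derivative (\<lambda>h. H\<phi> x *v h)) (at x)) \<and>
     continuous_on \<Omega> H\<phi>"

definition visc_super :: "(real^'n) set \<Rightarrow>
    (real^'n \<Rightarrow> real \<Rightarrow> real^'n \<Rightarrow> real^'n^'n \<Rightarrow> real) \<Rightarrow> (real^'n \<Rightarrow> real) \<Rightarrow> bool" where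
  "visc_super \<Omega> G u \<longleftrightarrow> continuous_on \<Omega> u \<and>
     (\<forall>\<phi> D\<phi> H\<phi> x0. C2_on \<Omega> \<phi> D\<phi> H\<phi> \<and> x0 \<in> \<Omega> \<and>
        (\<exists>e>0. \<forall>y\<in>\<Omega> \<inter> ball x0 e. u x0 - \<phi> x0 \<le> u y - \<phi> y) \<longrightarrow>
        G x0 (u x0) (D\<phi> x0) (H\<phi> x0) \<le> 0)"

definition visc_sub :: "(real^'n) set \<Rightarrow>
    (real^'n \<Rightarrow> real \<Rightarrow> real^'n \<Rightarrow> real^'n^'n \<Rightarrow> real) \<Rightarrow> (real^'n \<Rightarrow> real) \<Rightarrow> bool" where
  "visc_sub \<Omega> G u \<longleftrightarrow> continuous_on \<Omega> u \<and>
     (\<forall>\<phi> D\<phi> H\<phi> x0. C2_on \<Omega> \<phi> D\<phi> H\<phi> \<and> x0 \<in> \<Omega> \<and>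
        (\<exists>e>0. \<forall>y\<in>\<Omega> \<inter> ball x0 e. u y - \<phi> y \<le> u x0 - \<phi> x0) \<longrightarrow>
        G x0 (u x0) (D\<phi> x0) (H\<phi> x0) \<ge> 0)"

definition visc_sol :: "(real^'n) set \<Rightarrow>
    (real^'n \<Rightarrow> real \<Rightarrow> real^'n \<Rightarrow> real^'n^'n \<Rightarrow> real) \<Rightarrow> (real^'n \<Rightarrow> real) \<Rightarrow> bool" where
  "visc_sol \<Omega> G u \<longleftrightarrow> visc_super \<Omega> G u \<and> visc_sub \<Omega> G u"

text \<open>real power t^g for t \<ge> 0, g \<ge> 0, with the convention t^0 = 1 (also for t = 0)\<close>
definition rpow :: "real \<Rightarrow> real \<Rightarrow> real" where
  "rpow t g = (if g = 0 then 1 else t powr g)"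

definition G_aq :: "(real^'n \<Rightarrow> real^'n^'n \<Rightarrow> real) \<Rightarrow> real \<Rightarrow> (real^'n \<Rightarrow> real) \<Rightarrow> real
    \<Rightarrow> real^'n \<Rightarrow> real \<Rightarrow> real^'n \<Rightarrow> real^'n^'n \<Rightarrow> real" where
  "G_aq F \<gamma> a q x r p X = rpow (norm p) \<gamma> * F x X + a x * rpow r q"

definition solves_P :: "(real^'n) set \<Rightarrow> (real^'n \<Rightarrow> real^'n^'n \<Rightarrow> real) \<Rightarrow> real
    \<Rightarrow> (real^'n \<Rightarrow> real) \<Rightarrow> real \<Rightarrow> (real^'n \<Rightarrow> real) \<Rightarrow> bool" where
  "solves_P \<Omega> F \<gamma> a q u \<longleftrightarrow> continuous_on (closure \<Omega>) u \<and> (\<forall>x\<in>\<Omega>. u x \<ge> 0) \<and>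
     (\<forall>x\<in>frontier \<Omega>. u x = 0) \<and> visc_sol \<Omega> (G_aq F \<gamma> a q) u"

end

theory Submission imports Defs begin

lemma eig_I: "eigvals (mat 1 :: real^'n^'n) = {1}"
proof -
  have "\<exists>v::real^'n. v \<noteq> 0" by (metis zero_neq_one vec_eq_iff zero_index one_index)
  then show ?thesis unfolding eigvals_def
    by (auto simp: vec_eq_iff)
qed

lemma pucci_minus_I:
  assumes "0 < lam"
  shows "pucci_minus lam Lam (mat 1 :: real^'n^'n) > 0"
proof -
  have p: "pos_eig_sum (mat 1 :: real^'n^'n) = real (eigmult (mat 1 :: real^'n^'n) 1)"
  proof -
    have "{e\<in>{1::real}. e>0} = {1}" by auto
    then show ?thesis unfolding pos_eig_sum_def eig_I by simp
  qed
  have n: "neg_eig_sum (mat 1 :: real^'n^'n) = 0"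
  proof -
    have e: "{e\<in>{1::real}. e<0} = {}" by auto
    show ?thesis unfolding neg_eig_sum_def eig_I e by simp
  qed
  have "eigmult (mat 1 :: real^'n^'n) 1 = dim (UNIV :: (real^'n) set)"
    unfolding eigmult_def by simp
  also have "\<dots> > 0" by simp
  finally show ?thesis using assms unfolding pucci_minus_def p n by simp
qed

lemma mv_scale: "((c::real) *\<^sub>R (mat 1 :: real^'n^'n)) *v h = c *\<^sub>R h"
proof -
  have "\<And>i. (\<Sum>j\<in>UNIV. (c *\<^sub>R (mat 1 :: real^'n^'n)) $ i $ j * h $ j) = c * h $ i"
  proof -
    fix i
    have "(\<Sum>j\<in>UNIV. (c *\<^sub>R (mat 1 :: real^'n^'n)) $ i $ j * h $ j) = (\<Sum>j\<in>UNIV. if j = i then c * h $ j else 0)"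
      by (rule sum.cong) (auto simp: mat_def)
    also have "\<dots> = c * h $ i" by simp
    finally show "?thesis i" .
  qed
  then show ?thesis by (simp add: matrix_vector_mult_def vec_eq_iff)
qed

lemma F_neg:
  assumes "F1 \<Omega> F" "F2 \<Omega> F" "x \<in> \<Omega>" "0 < (d::real)"
  shows "F x ((-2*d) *\<^sub>R (mat 1 :: real^'n^'n)) < 0"
proof -
  obtain lam Lam where l: "0 < lam" "lam \<le> Lam" and
    H: "\<forall>x\<in>\<Omega>. \<forall>X\<in>Sym. \<forall>Y\<in>Sym. psd Y \<longrightarrow>
        pucci_minus lam Lam Y \<le> F x (X + Y) - F x X \<and>
        F x (X + Y) - F x X \<le> pucci_plus lam Lam Y"
    using assms(1) unfolding F1_def by blast
  define X :: "real^'n^'n" where "X = (-1) *\<^sub>R mat 1"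
  have symI: "(mat 1 :: real^'n^'n) \<in> Sym" unfolding Sym_def by (simp add: transpose_mat)
  have symX: "X \<in> Sym" unfolding Sym_def X_def by (simp add: vec_eq_iff transpose_def mat_def)
  have sym0: "(0::real^'n^'n) \<in> Sym" unfolding Sym_def by (simp add: vec_eq_iff transpose_def)
  have psdI: "psd (mat 1 :: real^'n^'n)" unfolding psd_def by simp
  have XY: "X + mat 1 = 0" unfolding X_def by (simp add: vec_eq_iff)
  have "F x ((2::real) *\<^sub>R 0) = 2 * F x 0" using assms(2,3) sym0 unfolding F2_def by (meson zero_less_numeral)
  then have F0: "F x 0 = 0" by simp
  have "pucci_minus lam Lam (mat 1 :: real^'n^'n) \<le> F x (X + mat 1) - F x X"
    using H assms(3) symX symI psdI by blast
  with F0 XY pucci_minus_I[OF l(1), of Lam, where 'n='n] have FX: "F x X < 0" by simp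
  have "F x ((2*d) *\<^sub>R X) = (2*d) * F x X" using assms(2,3,4) symX unfolding F2_def by auto
  moreover have "(2*d) *\<^sub>R X = (-2*d) *\<^sub>R (mat 1 :: real^'n^'n)" unfolding X_def by simp
  ultimately show ?thesis using FX assms(4) by (simp add: mult_pos_neg)
qed

theorem mainTheorem7:
  fixes \<Omega> :: "(real^'n) set" and F :: "real^'n \<Rightarrow> real^'n^'n \<Rightarrow> real"
    and \<gamma> q :: real and a u :: "real^'n \<Rightarrow> real"
  assumes "smooth_bounded_domain \<Omega>"
    and "\<gamma> \<ge> 0" and "0 < q" and "q < \<gamma> + 1"
    and "continuous_on (closure \<Omega>) a"
    and "continuous_on (\<Omega> \<times> Sym) (\<lambda>(x, X). F x X)"
    and "F1 \<Omega> F" and "F2 \<Omega> F"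
    and "solves_P \<Omega> F \<gamma> a q u"
    and "\<exists>x\<in>\<Omega>. u x \<noteq> 0"
  shows "\<exists>\<Omega>'. open \<Omega>' \<and> connected \<Omega>' \<and> \<Omega>' \<noteq> {} \<and> \<Omega>' \<subseteq> {x\<in>\<Omega>. a x > 0} \<and>
           (\<forall>x\<in>\<Omega>'. u x > 0)"
proof -
  have opn: "open \<Omega>" and bdd: "bounded \<Omega>" using assms(1) unfolding smooth_bounded_domain_def by auto
  have ucont: "continuous_on (closure \<Omega>) u" and upos: "\<forall>x\<in>\<Omega>. u x \<ge> 0"
    and ufr: "\<forall>x\<in>frontier \<Omega>. u x = 0" and usub: "visc_sub \<Omega> (G_aq F \<gamma> a q) u"
    using assms(9) unfolding solves_P_def visc_sol_def by auto
  have key: "\<exists>x\<in>\<Omega>. u x > 0 \<and> a x > 0"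
  proof (rule ccontr)
    assume nk: "\<not> ?thesis"
    have aneg: "a x * rpow (u x) q \<le> 0" if "x \<in> \<Omega>" for x
    proof (cases "u x = 0")
      case True then show ?thesis using assms(3) by (simp add: rpow_def)
    next
      case False
      then have "u x > 0" using upos that by force
      then have "a x \<le> 0" using nk that by force
      moreover have "rpow (u x) q \<ge> 0" by (simp add: rpow_def)
      ultimately show ?thesis by (simp add: mult_nonpos_nonneg)
    qed
    obtain x1 where x1: "x1 \<in> \<Omega>" "u x1 > 0" using assms(10) upos by force
    define m where "m = u x1"
    have cb: "bounded (closure \<Omega>)" using bdd by (rule bounded_closure)
    obtain z where z: "z \<notin> closure \<Omega>" using cb not_bounded_UNIV by (metis subsetI bounded_subset)
    obtain B where B: "\<forall>y\<in>closure \<Omega>. norm y \<le> B" using cb bounded_iff by blast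
    define R where "R = B + norm z"
    have R: "norm (y - z) \<le> R" if "y \<in> closure \<Omega>" for y
      using B that norm_triangle_ineq4[of y z] unfolding R_def by force
    have R0: "R \<ge> 0" using R x1 closure_subset by (meson norm_ge_zero order.trans subsetD)
    define d where "d = m / (2 * (R^2 + 1))"
    have d0: "d > 0" unfolding d_def m_def using x1 by (intro divide_pos_pos) (auto intro: add_nonneg_pos)
    have dR: "d * R^2 < m"
    proof -
      have "d * R^2 \<le> d * (R^2+1)" using d0 by simp
      also have "\<dots> = m/2"
      proof -
        have "R^2 + 1 > 0" by (simp add: add_nonneg_pos)
        then show ?thesis unfolding d_def by (simp add: field_simps)
      qed
      finally show ?thesis using x1 m_def by simp
    qed
    define \<psi> where "\<psi> y = u y + d * ((y - z) \<bullet> (y - z))" for y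
    have "continuous_on (closure \<Omega>) \<psi>" unfolding \<psi>_def
      by (intro continuous_intros ucont)
    moreover have "compact (closure \<Omega>)" using cb by (simp add: compact_eq_bounded_closed)
    moreover have "closure \<Omega> \<noteq> {}" using x1 closure_subset by blast
    ultimately obtain x0 where x0: "x0 \<in> closure \<Omega>" "\<forall>y\<in>closure \<Omega>. \<psi> y \<le> \<psi> x0"
      using continuous_attains_sup by metis
    have x0in: "x0 \<in> \<Omega>"
    proof (rule ccontr)
      assume "x0 \<notin> \<Omega>"
      then have "x0 \<in> frontier \<Omega>" using x0(1) opn by (simp add: frontier_def interior_open)
      then have "u x0 = 0" using ufr by blast
      then have "\<psi> x0 = d * (norm (x0 - z))^2" unfolding \<psi>_def by (simp add: power2_norm_eq_inner)
      also have "\<dots> \<le> d * R^2" using R[OF x0(1)] d0 by (simp add: power_mono)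
      also have "\<dots> < m" by (rule dR)
      also have "m \<le> \<psi> x1" unfolding \<psi>_def m_def using d0 by simp
      also have "\<psi> x1 \<le> \<psi> x0" using x0(2) x1(1) closure_subset by blast
      finally show False by simp
    qed
    have x0z: "x0 \<noteq> z" using x0in z closure_subset by blast
    define \<phi> where "\<phi> y = - d * ((y - z) \<bullet> (y - z))" for y
    define D\<phi> where "D\<phi> y = (-2*d) *\<^sub>R (y - z)" for y :: "real^'n"
    define H\<phi> where "H\<phi> (y::real^'n) = (-2*d) *\<^sub>R (mat 1 :: real^'n^'n)" for y
    have C2: "C2_on \<Omega> \<phi> D\<phi> H\<phi>"
      unfolding C2_on_def
    proof (intro conjI ballI)
      fix x assume "x \<in> \<Omega>"
      show "(\<phi> has_derivative (\<lambda>h. D\<phi> x \<bullet> h)) (at x)"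
        unfolding \<phi>_def D\<phi>_def
        by (auto intro!: derivative_eq_intros simp: inner_commute algebra_simps)
      show "(D\<phi> has_derivative (\<lambda>h. H\<phi> x *v h)) (at x)"
        unfolding D\<phi>_def H\<phi>_def mv_scale
        by (auto intro!: derivative_eq_intros)
    next
      show "continuous_on \<Omega> H\<phi>" unfolding H\<phi>_def by simp
    qed
    have loc: "\<exists>e>0. \<forall>y\<in>\<Omega> \<inter> ball x0 e. u y - \<phi> y \<le> u x0 - \<phi> x0"
      using x0(2) closure_subset unfolding \<psi>_def \<phi>_def by (intro exI[of _ 1]) auto
    have Gge: "G_aq F \<gamma> a q x0 (u x0) (D\<phi> x0) (H\<phi> x0) \<ge> 0"
      using usub C2 x0in loc unfolding visc_sub_def by blast
    have "norm (D\<phi> x0) > 0" unfolding D\<phi>_def using d0 x0z by simp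
    then have rp: "rpow (norm (D\<phi> x0)) \<gamma> > 0" by (simp add: rpow_def)
    have "F x0 (H\<phi> x0) < 0" unfolding H\<phi>_def using F_neg[OF assms(7,8) x0in d0] .
    then have "rpow (norm (D\<phi> x0)) \<gamma> * F x0 (H\<phi> x0) < 0" using rp by (simp add: mult_pos_neg)
    then have "G_aq F \<gamma> a q x0 (u x0) (D\<phi> x0) (H\<phi> x0) < 0"
      unfolding G_aq_def using aneg[OF x0in] by linarith
    then show False using Gge by simp
  qed
  then obtain x where x: "x \<in> \<Omega>" "u x > 0" "a x > 0" by blast
  have uc: "continuous_on \<Omega> u" using ucont closure_subset continuous_on_subset by blast
  have ac: "continuous_on \<Omega> a" using assms(5) closure_subset continuous_on_subset by blast
  define V where "V = {y\<in>\<Omega>. u y > 0} \<inter> {y\<in>\<Omega>. a y > 0}"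
  have Veq: "V = (\<Omega> \<inter> u -` {0<..}) \<inter> (\<Omega> \<inter> a -` {0<..})" unfolding V_def by auto
  have o1: "open (\<Omega> \<inter> u -` {0<..})" by (rule continuous_open_preimage[OF uc opn]) simp
  have o2: "open (\<Omega> \<inter> a -` {0<..})" by (rule continuous_open_preimage[OF ac opn]) simp
  have oV: "open V" unfolding Veq using o1 o2 by (rule open_Int)
  have xV: "x \<in> V" using x unfolding V_def by simp
  obtain r where r: "r > 0" "ball x r \<subseteq> V" using openE[OF oV xV] by blast
  have "ball x r \<subseteq> {x\<in>\<Omega>. a x > 0}" "\<forall>y\<in>ball x r. u y > 0" using r(2) unfolding V_def by auto
  moreover have "ball x r \<noteq> {}" using r(1) by simp
  ultimately show ?thesis
    by (intro exI[of _ "ball x r"]) (simp add: convex_connected)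
qed

end
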